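(* Let $F$ be an Archimedean vector lattice endowed with the uniform convergence and let $E$ be a majorizing sublattice of $F$. Then every $f\in\overline{E}^{1}_{+}$ is the uniform limit (and the supremum) of an increasing sequence in $E\cap[0_F,f]$; consequently $\overline{E}^{1}_{+}$ consists exactly of the uniform limits of increasing sequences in $E_+$. Moreover, $E$ is super order dense in $\overline{E}$, i.e. for every $f\in\overline{E}_{+}$ there is a countable $G\subset E$ with $f=\bigvee G$ (supremum in $\overline E$).
   Context: For $e\in F_+$, $F_e=\bigcup_{\lambda\ge0}\lambda[-e,e]$ with norm $\|f\|_e=\inf\{\lambda\ge0:|f|\le\lambda e\}$. A net $(f_\alpha)$ converges uniformly to $f$ if there is $e\in F_+$ with $f\in F_e$ and, for every $\varepsilon>0$, eventually $\|f_\alpha-f\|_e\le\varepsilon$. $\overline{E}^1$ (adherence) is the set of uniform limits of nets in $E$; a set is closed if it equals its adherence; $\overline E$ is the intersection of all closed sets containing $E$; for a set $A$, $A_+=A\cap F_+$. A sublattice $E$ is majorizing if for every $f\in F_+$ there is $e\in E$ with $f\le e$. *)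

theory Defs
  imports "HOL-Analysis.Analysis"
begin

definition archimedean_vl :: "('a::{ordered_real_vector,lattice}) itself \<Rightarrow> bool" where
  "archimedean_vl _ \<longleftrightarrow> (\<forall>x y::'a. (\<forall>n::nat. real n *\<^sub>R x \<le> y) \<longrightarrow> x \<le> 0)"

definition vabs :: "'a::{ordered_real_vector,lattice} \<Rightarrow> 'a" where
  "vabs f = sup f (- f)"

definition pos_part_set :: "'a::{ordered_real_vector,lattice} set \<Rightarrow> 'a set" where
  "pos_part_set A = A \<inter> {f. 0 \<le> f}"

definition principal_ideal :: "'a::{ordered_real_vector,lattice} \<Rightarrow> 'a set" where
  "principal_ideal e = (\<Union>c\<in>{0::real..}. {f. - (c *\<^sub>R e) \<le> f \<and> f \<le> c *\<^sub>R e})"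

definition unorm :: "'a::{ordered_real_vector,lattice} \<Rightarrow> 'a \<Rightarrow> real" where
  "unorm e f = Inf {c::real. 0 \<le> c \<and> vabs f \<le> c *\<^sub>R e}"

text \<open>Uniform convergence of a net, represented by a function x along a proper
  filter Fl (the filter of tails of the directed index set).\<close>
definition uconv :: "('i \<Rightarrow> 'a::{ordered_real_vector,lattice}) \<Rightarrow> 'i filter \<Rightarrow> 'a \<Rightarrow> bool" where
  "uconv x Fl f \<longleftrightarrow> (\<exists>e. 0 \<le> e \<and> f \<in> principal_ideal e \<and>
     (\<forall>\<epsilon>>0. \<forall>\<^sub>F \<alpha> in Fl. x \<alpha> - f \<in> principal_ideal e \<and> unorm e (x \<alpha> - f) \<le> \<epsilon>))"

text \<open>Adherence: uniform limits of nets in E.  A net in E is represented by its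
  (proper) tail filter on the ambient type, concentrated on E.\<close>
definition adherence :: "'a::{ordered_real_vector,lattice} set \<Rightarrow> 'a set" where
  "adherence E = {f. \<exists>Fl::'a filter. Fl \<noteq> bot \<and> (\<forall>\<^sub>F y in Fl. y \<in> E) \<and> uconv (\<lambda>y. y) Fl f}"

definition uclosed :: "'a::{ordered_real_vector,lattice} set \<Rightarrow> bool" where
  "uclosed A \<longleftrightarrow> adherence A = A"

definition uclosure :: "'a::{ordered_real_vector,lattice} set \<Rightarrow> 'a set" where
  "uclosure E = \<Inter>{C. uclosed C \<and> E \<subseteq> C}"

definition vector_sublattice :: "'a::{ordered_real_vector,lattice} set \<Rightarrow> bool" where
  "vector_sublattice E \<longleftrightarrow> 0 \<in> E \<and> (\<forall>x\<in>E. \<forall>y\<in>E. x + y \<in> E \<and> sup x y \<in> E \<and> inf x y \<in> E)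
      \<and> (\<forall>c::real. \<forall>x\<in>E. c *\<^sub>R x \<in> E)"

definition majorizing :: "'a::{ordered_real_vector,lattice} set \<Rightarrow> bool" where
  "majorizing E \<longleftrightarrow> (\<forall>f. 0 \<le> f \<longrightarrow> (\<exists>e\<in>E. f \<le> e))"

definition is_sup_in :: "'a::order set \<Rightarrow> 'a set \<Rightarrow> 'a \<Rightarrow> bool" where
  "is_sup_in A G s \<longleftrightarrow> s \<in> A \<and> (\<forall>g\<in>G. g \<le> s) \<and> (\<forall>u\<in>A. (\<forall>g\<in>G. g \<le> u) \<longrightarrow> s \<le> u)"

end

theory Submission
  imports Defs
begin

lemma arch_lemma:
  fixes a b :: "'a::{ordered_real_vector,lattice}"
  assumes arch: "archimedean_vl TYPE('a)" and b: "0 \<le> b"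
    and h: "\<And>n::nat. a \<le> (1 / (real n + 1)) *\<^sub>R b"
  shows "a \<le> 0"
proof -
  have "real n *\<^sub>R a \<le> b" for n :: nat
  proof -
    have "real n *\<^sub>R a \<le> real n *\<^sub>R ((1 / (real n + 1)) *\<^sub>R b)"
      by (rule scaleR_left_mono[OF h]) simp
    also have "\<dots> = (real n / (real n + 1)) *\<^sub>R b" by simp
    also have "\<dots> \<le> 1 *\<^sub>R b" by (rule scaleR_right_mono[OF _ b]) simp
    finally show ?thesis by simp
  qed
  then show ?thesis using arch unfolding archimedean_vl_def by blast
qed

lemma small_eventually:
  assumes "(\<epsilon>::real) > 0"
  shows "\<exists>N. \<forall>n\<ge>N. 1 / (real n + 1) \<le> \<epsilon>"
proof -
  obtain N :: nat where N: "1 / \<epsilon> < real N" using reals_Archimedean2 by blast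
  have "1 / (real n + 1) \<le> \<epsilon>" if "n \<ge> N" for n
  proof -
    have "1 / \<epsilon> < real n + 1" using N that by linarith
    then have "1 < \<epsilon> * (real n + 1)" using assms by (simp add: field_simps)
    then show ?thesis using assms by (simp add: field_simps)
  qed
  then show ?thesis by blast
qed

lemma unorm_lt:
  fixes g e :: "'a::{ordered_real_vector,lattice}"
  assumes "g \<in> principal_ideal e" "unorm e g < c" "0 \<le> e"
  shows "- (c *\<^sub>R e) \<le> g \<and> g \<le> c *\<^sub>R e"
proof -
  let ?S = "{c::real. 0 \<le> c \<and> vabs g \<le> c *\<^sub>R e}"
  from assms(1) obtain c0 where c0: "0 \<le> c0" "- (c0 *\<^sub>R e) \<le> g" "g \<le> c0 *\<^sub>R e"
    unfolding principal_ideal_def by blast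
  have "vabs g \<le> c0 *\<^sub>R e" unfolding vabs_def using c0
    by (metis sup_least minus_le_iff)
  then have ne: "?S \<noteq> {}" using c0 by blast
  have bdd: "bdd_below ?S" by (rule bdd_belowI[of _ 0]) simp
  from assms(2) obtain x where x: "x \<in> ?S" "x < c"
    using cInf_less_iff[OF ne bdd] unfolding unorm_def by blast
  have "vabs g \<le> x *\<^sub>R e" using x(1) by simp
  also have "\<dots> \<le> c *\<^sub>R e" using x(2) assms(3) by (intro scaleR_right_mono) simp_all
  finally have "vabs g \<le> c *\<^sub>R e" .
  then show ?thesis unfolding vabs_def by (metis le_supE minus_le_iff)
qed

lemma unorm_le:
  fixes g e :: "'a::{ordered_real_vector,lattice}"
  assumes "- (c *\<^sub>R e) \<le> g" "g \<le> c *\<^sub>R e" "0 \<le> c"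
  shows "g \<in> principal_ideal e \<and> unorm e g \<le> c"
proof
  show "g \<in> principal_ideal e" unfolding principal_ideal_def using assms
    by (intro UN_I[of c]) simp_all
  have "vabs g \<le> c *\<^sub>R e" unfolding vabs_def using assms by (metis sup_least minus_le_iff)
  then have "c \<in> {c::real. 0 \<le> c \<and> vabs g \<le> c *\<^sub>R e}" using assms by simp
  moreover have "bdd_below {c::real. 0 \<le> c \<and> vabs g \<le> c *\<^sub>R e}"
    by (rule bdd_belowI[of _ 0]) simp
  ultimately show "unorm e g \<le> c" unfolding unorm_def by (rule cInf_lower)
qed

lemma adh_approx:
  fixes f :: "'a::{ordered_real_vector,lattice}"
  assumes "f \<in> adherence A"
  obtains e where "0 \<le> e" "f \<in> principal_ideal e"
    "\<And>\<epsilon>. \<epsilon> > 0 \<Longrightarrow> \<exists>y\<in>A. - (\<epsilon> *\<^sub>R e) \<le> y - f \<and> y - f \<le> \<epsilon> *\<^sub>R e"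
proof -
  from assms obtain Fl e where Fl: "Fl \<noteq> bot" "\<forall>\<^sub>F y in Fl. y \<in> A"
    and e: "0 \<le> e" "f \<in> principal_ideal e"
    and H: "\<forall>\<epsilon>>0. \<forall>\<^sub>F y in Fl. y - f \<in> principal_ideal e \<and> unorm e (y - f) \<le> \<epsilon>"
    unfolding adherence_def uconv_def by blast
  have "\<exists>y\<in>A. - (\<epsilon> *\<^sub>R e) \<le> y - f \<and> y - f \<le> \<epsilon> *\<^sub>R e" if "\<epsilon> > 0" for \<epsilon>
  proof -
    have "\<epsilon>/2 > 0" using that by simp
    with H have h2: "\<forall>\<^sub>F y in Fl. y - f \<in> principal_ideal e \<and> unorm e (y - f) \<le> \<epsilon>/2"
      by blast
    obtain y where y0: "y \<in> A \<and> (y - f \<in> principal_ideal e \<and> unorm e (y - f) \<le> \<epsilon>/2)"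
      using eventually_happens'[OF Fl(1) eventually_conj[OF Fl(2) h2]] by blast
    then have y: "y \<in> A" "y - f \<in> principal_ideal e" "unorm e (y - f) \<le> \<epsilon>/2" by auto
    have "unorm e (y - f) < \<epsilon>" using y(3) that by linarith
    then show ?thesis using unorm_lt[OF y(2) _ e(1)] y(1) by blast
  qed
  then show ?thesis using that e by blast
qed

lemma sub_props:
  assumes "vector_sublattice E"
  shows "0 \<in> E" "\<And>x y. x \<in> E \<Longrightarrow> y \<in> E \<Longrightarrow> x + y \<in> E"
    "\<And>x y. x \<in> E \<Longrightarrow> y \<in> E \<Longrightarrow> sup x y \<in> E"
    "\<And>x c. x \<in> E \<Longrightarrow> c *\<^sub>R x \<in> E"
    "\<And>x y. x \<in> E \<Longrightarrow> y \<in> E \<Longrightarrow> x - y \<in> E"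
proof -
  show "0 \<in> E" using assms unfolding vector_sublattice_def by blast
  show A: "\<And>x y. x \<in> E \<Longrightarrow> y \<in> E \<Longrightarrow> x + y \<in> E" using assms unfolding vector_sublattice_def by blast
  show "\<And>x y. x \<in> E \<Longrightarrow> y \<in> E \<Longrightarrow> sup x y \<in> E" using assms unfolding vector_sublattice_def by blast
  show S: "\<And>x c. x \<in> E \<Longrightarrow> c *\<^sub>R x \<in> E" using assms unfolding vector_sublattice_def by blast
  show "\<And>x y. x \<in> E \<Longrightarrow> y \<in> E \<Longrightarrow> x - y \<in> E"
  proof -
    fix x y assume "x \<in> E" "y \<in> E"
    then have "x + (-1) *\<^sub>R y \<in> E" using A S by blast
    then show "x - y \<in> E" by simp
  qed
qed

lemma lower_from_diff:
  fixes a b c :: "'a::{ordered_real_vector,lattice}"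
  assumes "a - b \<le> c" shows "- c \<le> b - a"
  using assms by (metis minus_diff_eq neg_le_iff_le)

lemma upper_from_diff:
  fixes a b c :: "'a::{ordered_real_vector,lattice}"
  assumes "- c \<le> b - a" shows "a - b \<le> c"
  using assms by (metis minus_diff_eq neg_le_iff_le)

lemma part1:
  fixes E :: "'a::{ordered_real_vector,lattice} set"
  assumes arch: "archimedean_vl TYPE('a)"
    and sub: "vector_sublattice E"
    and maj: "majorizing E"
    and fA: "f \<in> adherence E" and f0: "0 \<le> f"
  shows "\<exists>x::nat \<Rightarrow> 'a.
            incseq x \<and> (\<forall>n. x n \<in> E \<and> 0 \<le> x n \<and> x n \<le> f) \<and>
            uconv x sequentially f \<and> is_sup_in UNIV (range x) f"
proof -
  note SP = sub_props[OF sub]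
  obtain e where e0: "0 \<le> e" and eI: "f \<in> principal_ideal e"
    and appr: "\<And>\<epsilon>. \<epsilon> > 0 \<Longrightarrow> \<exists>y\<in>E. - (\<epsilon> *\<^sub>R e) \<le> y - f \<and> y - f \<le> \<epsilon> *\<^sub>R e"
    using adh_approx[OF fA] by blast
  obtain u where uE: "u \<in> E" and eu: "e \<le> u" using maj e0 unfolding majorizing_def by blast
  have u0: "0 \<le> u" using e0 eu by simp
  define d where "d n = 1 / (real n + 1)" for n :: nat
  have dpos: "d n > 0" for n unfolding d_def by simp
  have "\<forall>n. \<exists>y. y \<in> E \<and> - ((d n / 2) *\<^sub>R e) \<le> y - f \<and> y - f \<le> (d n / 2) *\<^sub>R e"
  proof
    fix n
    have "d n / 2 > 0" using dpos[of n] by simp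
    then show "\<exists>y. y \<in> E \<and> - ((d n / 2) *\<^sub>R e) \<le> y - f \<and> y - f \<le> (d n / 2) *\<^sub>R e"
      using appr by blast
  qed
  from choice[OF this] obtain g where gg: "\<forall>n. g n \<in> E \<and> - ((d n / 2) *\<^sub>R e) \<le> g n - f \<and> g n - f \<le> (d n / 2) *\<^sub>R e"
    by blast
  have g: "\<And>n. g n \<in> E" "\<And>n. - ((d n / 2) *\<^sub>R e) \<le> g n - f"
     "\<And>n. g n - f \<le> (d n / 2) *\<^sub>R e" using gg by simp_all
  define h where "h n = sup (g n - (d n / 2) *\<^sub>R u) 0" for n
  have hE: "h n \<in> E" for n unfolding h_def
    by (rule SP(3)[OF SP(5)[OF g(1) SP(4)[OF uE]] SP(1)])
  have h0: "0 \<le> h n" for n unfolding h_def by simp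
  have ceu: "(d n / 2) *\<^sub>R e \<le> (d n / 2) *\<^sub>R u" for n
    using eu dpos[of n] by (intro scaleR_left_mono) simp_all
  have hf: "h n \<le> f" for n
  proof -
    have "g n \<le> f + (d n / 2) *\<^sub>R e" using g(3)[of n] by (simp add: diff_le_eq add.commute)
    also have "\<dots> \<le> f + (d n / 2) *\<^sub>R u" using ceu[of n] by simp
    finally have "g n - (d n / 2) *\<^sub>R u \<le> f" by (simp add: diff_le_eq)
    then show ?thesis unfolding h_def using f0 by simp
  qed
  have hgap: "f - h n \<le> d n *\<^sub>R u" for n
  proof -
    have "f - h n \<le> f - (g n - (d n / 2) *\<^sub>R u)" unfolding h_def
      by (intro diff_left_mono) simp
    also have "\<dots> = (f - g n) + (d n / 2) *\<^sub>R u" by (simp add: algebra_simps)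
    also have "\<dots> \<le> (d n / 2) *\<^sub>R e + (d n / 2) *\<^sub>R u"
      using upper_from_diff[OF g(2)[of n]] by (intro add_right_mono)
    also have "\<dots> \<le> (d n / 2) *\<^sub>R u + (d n / 2) *\<^sub>R u" using ceu[of n] by (intro add_right_mono)
    also have "\<dots> = d n *\<^sub>R u" by (simp flip: scaleR_left_distrib)
    finally show ?thesis .
  qed
  define x where "x = rec_nat (h 0) (\<lambda>n xn. sup xn (h (Suc n)))"
  have x0: "x 0 = h 0" and xS: "\<And>n. x (Suc n) = sup (x n) (h (Suc n))" unfolding x_def by simp_all
  have xp: "x n \<in> E \<and> 0 \<le> x n \<and> x n \<le> f \<and> h n \<le> x n" for n
  proof (induction n)
    case 0 then show ?case using x0 hE h0 hf by simp
  next
    case (Suc n) then show ?case using xS[of n] hE[of "Suc n"] SP(3) hf[of "Suc n"]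
      by (auto intro: le_supI1)
  qed
  have inc: "incseq x" by (rule incseq_SucI) (simp add: xS)
  have xgap: "f - x n \<le> d n *\<^sub>R u" for n
  proof -
    have "f - x n \<le> f - h n" using xp[of n] by (intro diff_left_mono) simp
    then show ?thesis using hgap[of n] by (rule order_trans)
  qed
  have fu: "f \<in> principal_ideal u"
  proof -
    from eI obtain c0 where c0: "0 \<le> c0" "- (c0 *\<^sub>R e) \<le> f" "f \<le> c0 *\<^sub>R e"
      unfolding principal_ideal_def by blast
    have "c0 *\<^sub>R e \<le> c0 *\<^sub>R u" using eu c0(1) by (rule scaleR_left_mono)
    then have "- (c0 *\<^sub>R u) \<le> - (c0 *\<^sub>R e)" by simp
    then have "- (c0 *\<^sub>R u) \<le> f" "f \<le> c0 *\<^sub>R u" using c0 \<open>c0 *\<^sub>R e \<le> c0 *\<^sub>R u\<close>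
      by (meson order_trans)+
    then show ?thesis unfolding principal_ideal_def using c0(1) by (intro UN_I[of c0]) simp_all
  qed
  have conv: "uconv x sequentially f"
    unfolding uconv_def
  proof (intro exI[of _ u] conjI allI impI)
    show "0 \<le> u" by (rule u0)
    show "f \<in> principal_ideal u" by (rule fu)
    fix \<epsilon> :: real assume "\<epsilon> > 0"
    then obtain N where N: "\<And>n. n \<ge> N \<Longrightarrow> d n \<le> \<epsilon>" using small_eventually unfolding d_def by blast
    show "\<forall>\<^sub>F n in sequentially. x n - f \<in> principal_ideal u \<and> unorm u (x n - f) \<le> \<epsilon>"
      unfolding eventually_sequentially
    proof (intro exI[of _ N] allI impI)
      fix n assume "n \<ge> N"
      have a: "- (d n *\<^sub>R u) \<le> x n - f" using lower_from_diff[OF xgap[of n]] .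
      have b: "x n - f \<le> d n *\<^sub>R u"
      proof -
        have "x n - f \<le> 0" using xp[of n] by simp
        also have "0 \<le> d n *\<^sub>R u" using dpos[of n] u0 by (intro scaleR_nonneg_nonneg) simp_all
        finally show ?thesis .
      qed
      have "x n - f \<in> principal_ideal u \<and> unorm u (x n - f) \<le> d n"
        using unorm_le[OF a b] dpos[of n] by simp
      then show "x n - f \<in> principal_ideal u \<and> unorm u (x n - f) \<le> \<epsilon>" using N[OF \<open>n \<ge> N\<close>] by simp
    qed
  qed
  have sup: "is_sup_in UNIV (range x) f"
    unfolding is_sup_in_def
  proof (intro conjI ballI allI impI)
    show "f \<in> UNIV" by simp
    fix y assume "y \<in> range x" then show "y \<le> f" using xp by auto
  next
    fix v assume v: "v \<in> UNIV" "\<forall>g\<in>range x. g \<le> v"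
    have "f - v \<le> (1 / (real n + 1)) *\<^sub>R u" for n
    proof -
      have "f - v \<le> f - x n" using v by (intro diff_left_mono) simp
      moreover have "f - x n \<le> (1 / (real n + 1)) *\<^sub>R u" using xgap[of n] unfolding d_def .
      ultimately show ?thesis by (rule order_trans)
    qed
    then have "f - v \<le> 0" by (rule arch_lemma[OF arch u0])
    then show "f \<le> v" by simp
  qed
  show ?thesis using inc xp conv sup by blast
qed

lemma self_adh:
  fixes f :: "'a::{ordered_real_vector,lattice}"
  assumes "f \<in> A" shows "f \<in> adherence A"
proof -
  define e where "e = sup f 0 + sup (- f) 0"
  have e0: "0 \<le> e" unfolding e_def by (intro add_nonneg_nonneg) simp_all
  have "f \<le> e" unfolding e_def by (intro add_increasing2) simp_all
  moreover have "- f \<le> e" unfolding e_def by (intro add_increasing) simp_all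
  ultimately have fe: "- (1 *\<^sub>R e) \<le> f" "f \<le> 1 *\<^sub>R e" by (simp_all add: minus_le_iff)
  have "f \<in> principal_ideal e" using unorm_le[OF fe] by simp
  moreover have "\<forall>\<epsilon>>0. \<forall>\<^sub>F y in principal {f}. y - f \<in> principal_ideal e \<and> unorm e (y - f) \<le> \<epsilon>"
  proof (intro allI impI)
    fix \<epsilon> :: real assume "\<epsilon> > 0"
    then have z: "(0::'a) \<le> \<epsilon> *\<^sub>R e" using e0 by (intro scaleR_nonneg_nonneg) simp_all
    then have a: "- (\<epsilon> *\<^sub>R e) \<le> (0::'a)" "(0::'a) \<le> \<epsilon> *\<^sub>R e" by simp_all
    show "\<forall>\<^sub>F y in principal {f}. y - f \<in> principal_ideal e \<and> unorm e (y - f) \<le> \<epsilon>"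
      unfolding eventually_principal using unorm_le[OF a] \<open>\<epsilon> > 0\<close> by simp
  qed
  ultimately have "uconv (\<lambda>y. y) (principal {f}) f" unfolding uconv_def using e0 by blast
  moreover have "principal {f} \<noteq> bot" by (simp add: principal_eq_bot_iff)
  moreover have "\<forall>\<^sub>F y in principal {f}. y \<in> A" using assms by (simp add: eventually_principal)
  ultimately show ?thesis unfolding adherence_def by blast
qed

definition Dset :: "'a::{ordered_real_vector,lattice} set \<Rightarrow> 'a set" where
  "Dset E = {f. \<exists>G. G \<subseteq> E \<and> countable G \<and> is_sup_in UNIV G (sup f 0)}"

lemma E_sub_D:
  assumes sub: "vector_sublattice E" shows "E \<subseteq> Dset E"
proof
  fix f assume "f \<in> E"
  then have "sup f 0 \<in> E" using sub_props[OF sub] by blast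
  then have "{sup f 0} \<subseteq> E \<and> countable {sup f 0} \<and> is_sup_in UNIV {sup f 0} (sup f 0)"
    by (simp add: is_sup_in_def)
  then show "f \<in> Dset E" unfolding Dset_def by blast
qed

lemma adh_D:
  fixes E :: "'a::{ordered_real_vector,lattice} set"
  assumes arch: "archimedean_vl TYPE('a)"
    and sub: "vector_sublattice E"
    and maj: "majorizing E"
    and fA: "f \<in> adherence (Dset E)"
  shows "f \<in> Dset E"
proof -
  note SP = sub_props[OF sub]
  obtain e where e0: "0 \<le> e" and eI: "f \<in> principal_ideal e"
    and appr: "\<And>\<epsilon>. \<epsilon> > 0 \<Longrightarrow> \<exists>y\<in>Dset E. - (\<epsilon> *\<^sub>R e) \<le> y - f \<and> y - f \<le> \<epsilon> *\<^sub>R e"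
    using adh_approx[OF fA] by blast
  obtain u where uE: "u \<in> E" and eu: "e \<le> u" using maj e0 unfolding majorizing_def by blast
  have u0: "0 \<le> u" using e0 eu by (rule order_trans)
  define d where "d n = 1 / (real n + 1)" for n :: nat
  have dpos: "d n > 0" for n unfolding d_def by simp
  have "\<forall>n. \<exists>y. y \<in> Dset E \<and> - ((d n / 2) *\<^sub>R e) \<le> y - f \<and> y - f \<le> (d n / 2) *\<^sub>R e"
  proof
    fix n
    have "d n / 2 > 0" using dpos[of n] by simp
    then show "\<exists>y. y \<in> Dset E \<and> - ((d n / 2) *\<^sub>R e) \<le> y - f \<and> y - f \<le> (d n / 2) *\<^sub>R e"
      using appr by blast
  qed
  from choice[OF this] obtain g where gg: "\<forall>n. g n \<in> Dset E \<and> - ((d n / 2) *\<^sub>R e) \<le> g n - f \<and> g n - f \<le> (d n / 2) *\<^sub>R e"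
    by blast
  have g: "\<And>n. g n \<in> Dset E" "\<And>n. - ((d n / 2) *\<^sub>R e) \<le> g n - f"
     "\<And>n. g n - f \<le> (d n / 2) *\<^sub>R e" using gg by simp_all
  have "\<forall>n. \<exists>G. G \<subseteq> E \<and> countable G \<and> is_sup_in UNIV G (sup (g n) 0)"
    using g(1) unfolding Dset_def by blast
  from choice[OF this] obtain Gs where Gs: "\<forall>n. Gs n \<subseteq> E \<and> countable (Gs n) \<and> is_sup_in UNIV (Gs n) (sup (g n) 0)"
    by blast
  have GsE: "\<And>n. Gs n \<subseteq> E" and Gsc: "\<And>n. countable (Gs n)"
    and Gsub: "\<And>n y. y \<in> Gs n \<Longrightarrow> y \<le> sup (g n) 0"
    and Gsl: "\<And>n v. (\<forall>y\<in>Gs n. y \<le> v) \<Longrightarrow> sup (g n) 0 \<le> v"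
    using Gs unfolding is_sup_in_def by auto
  define k where "k n y = sup (y - (d n / 2) *\<^sub>R u) 0" for n y
  define G where "G = (\<Union>n. k n ` Gs n)"
  have kE: "k n y \<in> E" if "y \<in> E" for n y
    unfolding k_def by (rule SP(3)[OF SP(5)[OF that SP(4)[OF uE]] SP(1)])
  have GE: "G \<subseteq> E" unfolding G_def using kE GsE by blast
  have Gc: "countable G" unfolding G_def using Gsc by (intro countable_UN) simp_all
  have ceu: "(d n / 2) *\<^sub>R e \<le> (d n / 2) *\<^sub>R u" for n
    using eu dpos[of n] by (intro scaleR_left_mono) simp_all
  have ce0: "0 \<le> (d n / 2) *\<^sub>R e" for n
    using e0 dpos[of n] by (intro scaleR_nonneg_nonneg) simp_all
  have upper: "k n y \<le> sup f 0" if "y \<in> Gs n" for n y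
  proof -
    have "g n \<le> f + (d n / 2) *\<^sub>R e" using g(3)[of n] by (simp add: diff_le_eq add.commute)
    also have "\<dots> \<le> sup f 0 + (d n / 2) *\<^sub>R e" by (intro add_right_mono) simp
    finally have a: "g n \<le> sup f 0 + (d n / 2) *\<^sub>R e" .
    have b: "0 \<le> sup f 0 + (d n / 2) *\<^sub>R e" using ce0[of n] by (intro add_nonneg_nonneg) simp_all
    have "y \<le> sup (g n) 0" using Gsub[OF that] .
    also have "\<dots> \<le> sup f 0 + (d n / 2) *\<^sub>R e" using a b by simp
    also have "\<dots> \<le> sup f 0 + (d n / 2) *\<^sub>R u" using ceu[of n] by simp
    finally have "y - (d n / 2) *\<^sub>R u \<le> sup f 0" by (simp add: diff_le_eq)
    then show ?thesis unfolding k_def by simp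
  qed
  have least: "sup f 0 \<le> v" if v: "\<forall>y\<in>G. y \<le> v" for v
  proof -
    have "sup f 0 - v \<le> (1 / (real n + 1)) *\<^sub>R u" for n
    proof -
      have "\<forall>y\<in>Gs n. y \<le> v + (d n / 2) *\<^sub>R u"
      proof
        fix y assume y: "y \<in> Gs n"
        have "y - (d n / 2) *\<^sub>R u \<le> k n y" unfolding k_def by simp
        also have "k n y \<le> v" using v y unfolding G_def by blast
        finally show "y \<le> v + (d n / 2) *\<^sub>R u" by (simp add: diff_le_eq)
      qed
      then have s: "sup (g n) 0 \<le> v + (d n / 2) *\<^sub>R u" by (rule Gsl)
      have "f \<le> g n + (d n / 2) *\<^sub>R e"
        using upper_from_diff[OF g(2)[of n]] by (simp add: diff_le_eq add.commute)
      also have "\<dots> \<le> sup (g n) 0 + (d n / 2) *\<^sub>R e" by (intro add_right_mono) simp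
      finally have a: "f \<le> sup (g n) 0 + (d n / 2) *\<^sub>R e" .
      have b: "0 \<le> sup (g n) 0 + (d n / 2) *\<^sub>R e" using ce0[of n] by (intro add_nonneg_nonneg) simp_all
      have "sup f 0 \<le> sup (g n) 0 + (d n / 2) *\<^sub>R e" using a b by simp
      also have "\<dots> \<le> (v + (d n / 2) *\<^sub>R u) + (d n / 2) *\<^sub>R u" using s ceu[of n] by (rule add_mono)
      also have "\<dots> = v + d n *\<^sub>R u" by (simp add: add.assoc flip: scaleR_left_distrib)
      finally have "sup f 0 - v \<le> d n *\<^sub>R u" by (simp add: diff_le_eq add.commute)
      then show ?thesis unfolding d_def .
    qed
    then have "sup f 0 - v \<le> 0" by (rule arch_lemma[OF arch u0])
    then show ?thesis by simp
  qed
  have "is_sup_in UNIV G (sup f 0)"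
    unfolding is_sup_in_def using upper least unfolding G_def by blast
  then show ?thesis unfolding Dset_def using GE Gc by blast
qed

lemma uclosure_sub_D:
  fixes E :: "'a::{ordered_real_vector,lattice} set"
  assumes arch: "archimedean_vl TYPE('a)"
    and sub: "vector_sublattice E"
    and maj: "majorizing E"
  shows "uclosure E \<subseteq> Dset E"
proof -
  have "adherence (Dset E) = Dset E"
    using adh_D[OF arch sub maj] self_adh by blast
  then have "uclosed (Dset E)" unfolding uclosed_def .
  then show ?thesis unfolding uclosure_def using E_sub_D[OF sub] by blast
qed

lemma part2b:
  fixes E :: "'a::{ordered_real_vector,lattice} set"
  assumes arch: "archimedean_vl TYPE('a)"
    and x: "\<forall>n. x n \<in> pos_part_set E" and c: "uconv x sequentially f"
  shows "f \<in> pos_part_set (adherence E)"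
proof -
  have "filtermap x sequentially \<noteq> bot" by (simp add: filtermap_bot_iff)
  moreover have "\<forall>\<^sub>F y in filtermap x sequentially. y \<in> E"
    using x unfolding eventually_filtermap pos_part_set_def by simp
  moreover have "uconv (\<lambda>y. y) (filtermap x sequentially) f"
    using c unfolding uconv_def eventually_filtermap by simp
  ultimately have fA: "f \<in> adherence E" unfolding adherence_def by blast
  from c obtain e where e0: "0 \<le> e" and
    H: "\<forall>\<epsilon>>0. \<forall>\<^sub>F n in sequentially. x n - f \<in> principal_ideal e \<and> unorm e (x n - f) \<le> \<epsilon>"
    unfolding uconv_def by blast
  have "- f \<le> (1 / (real n + 1)) *\<^sub>R e" for n
  proof -
    have p: "1 / (real n + 1) / 2 > 0" by simp
    from H p obtain N where N: "\<forall>m\<ge>N. x m - f \<in> principal_ideal e \<and> unorm e (x m - f) \<le> 1 / (real n + 1) / 2"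
      unfolding eventually_sequentially by blast
    then have a: "x N - f \<in> principal_ideal e" "unorm e (x N - f) \<le> 1 / (real n + 1) / 2" by auto
    define q where "q = 1 / (real n + 1)"
    have q: "q > 0" unfolding q_def by simp
    have "unorm e (x N - f) < q" using a(2) q unfolding q_def[symmetric] by linarith
    then have "unorm e (x N - f) < 1 / (real n + 1)" unfolding q_def .
    then have b: "x N - f \<le> (1 / (real n + 1)) *\<^sub>R e" using unorm_lt[OF a(1) _ e0] by blast
    have "0 \<le> x N" using x unfolding pos_part_set_def by simp
    then have "- f \<le> x N - f" by simp
    then show ?thesis using b by (rule order_trans)
  qed
  then have "- f \<le> 0" by (rule arch_lemma[OF arch e0])
  then show ?thesis using fA unfolding pos_part_set_def by simp
qed

theorem proposition11p3:
  fixes E :: "'a::{ordered_real_vector,lattice} set"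
  assumes arch: "archimedean_vl TYPE('a)"
    and sub: "vector_sublattice E"
    and maj: "majorizing E"
  shows "(\<forall>f\<in>pos_part_set (adherence E). \<exists>x::nat \<Rightarrow> 'a.
            incseq x \<and> (\<forall>n. x n \<in> E \<and> 0 \<le> x n \<and> x n \<le> f) \<and>
            uconv x sequentially f \<and> is_sup_in UNIV (range x) f)
     \<and> pos_part_set (adherence E) =
         {f. \<exists>x::nat \<Rightarrow> 'a. incseq x \<and> (\<forall>n. x n \<in> pos_part_set E) \<and> uconv x sequentially f}
     \<and> (\<forall>f\<in>pos_part_set (uclosure E). \<exists>G. G \<subseteq> E \<and> countable G \<and> is_sup_in (uclosure E) G f)"
proof (intro conjI)
  show P1: "\<forall>f\<in>pos_part_set (adherence E). \<exists>x::nat \<Rightarrow> 'a.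
            incseq x \<and> (\<forall>n. x n \<in> E \<and> 0 \<le> x n \<and> x n \<le> f) \<and>
            uconv x sequentially f \<and> is_sup_in UNIV (range x) f"
    using part1[OF arch sub maj] unfolding pos_part_set_def by blast
  show "pos_part_set (adherence E) =
         {f. \<exists>x::nat \<Rightarrow> 'a. incseq x \<and> (\<forall>n. x n \<in> pos_part_set E) \<and> uconv x sequentially f}"
  proof
    show "pos_part_set (adherence E) \<subseteq> {f. \<exists>x::nat \<Rightarrow> 'a. incseq x \<and> (\<forall>n. x n \<in> pos_part_set E) \<and> uconv x sequentially f}"
    proof
      fix f assume "f \<in> pos_part_set (adherence E)"
      then obtain x :: "nat \<Rightarrow> 'a" where "incseq x" "\<forall>n. x n \<in> E \<and> 0 \<le> x n \<and> x n \<le> f"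
          "uconv x sequentially f" using P1 by blast
      then show "f \<in> {f. \<exists>x::nat \<Rightarrow> 'a. incseq x \<and> (\<forall>n. x n \<in> pos_part_set E) \<and> uconv x sequentially f}"
        unfolding pos_part_set_def by blast
    qed
    show "{f. \<exists>x::nat \<Rightarrow> 'a. incseq x \<and> (\<forall>n. x n \<in> pos_part_set E) \<and> uconv x sequentially f} \<subseteq> pos_part_set (adherence E)"
      using part2b[OF arch] by blast
  qed
  show "\<forall>f\<in>pos_part_set (uclosure E). \<exists>G. G \<subseteq> E \<and> countable G \<and> is_sup_in (uclosure E) G f"
  proof
    fix f assume f: "f \<in> pos_part_set (uclosure E)"
    then have fC: "f \<in> uclosure E" and f0: "0 \<le> f" unfolding pos_part_set_def by auto
    then have "f \<in> Dset E" using uclosure_sub_D[OF arch sub maj] by blast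
    then obtain G where G: "G \<subseteq> E" "countable G" "is_sup_in UNIV G (sup f 0)"
      unfolding Dset_def by blast
    have "sup f 0 = f" using f0 by (simp add: sup_absorb1)
    then have "is_sup_in (uclosure E) G f" using G(3) fC unfolding is_sup_in_def by auto
    then show "\<exists>G. G \<subseteq> E \<and> countable G \<and> is_sup_in (uclosure E) G f" using G by blast
  qed
qed

end
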